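(* Let $M$ be a finitary matroid and $N$ a cofinitary matroid on the same ground set $E$. If $\mathsf{cond}^+(M,N)$ holds, then $N$ has a base that is independent in $M$.
   Context: Matroids are possibly infinite. $M.X:=M/(E\setminus X)$, where $M/X:=(M^*\upharpoonright(E\setminus X))^*$. Finitary: all circuits finite; cofinitary: dual finitary. A loop is an element $e$ with $\{e\}$ dependent; $r(K)=0$ means the empty set is a base of $K$. $W\subseteq E$ is an $(M,N)$-wave if $M\upharpoonright W$ has a base independent in $N.W$; the union of all waves is a wave, denoted $W(M,N)$. $\mathsf{cond}^+(M,N)$: $W(M,N)$ consists of $M$-loops and $r(N.W(M,N))=0$. *)

theory Defs
  imports Main
begin

text \<open>Possibly infinite matroids, given by ground set and independence predicate,
  with the independence axioms (I1)-(I3) and (IM) of Bruhn, Diestel, Kriesell,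
  Pendavingh and Wollan.\<close>

record 'a matroid =
  carrier :: "'a set"
  indep :: "'a set \<Rightarrow> bool"

definition basis :: "'a matroid \<Rightarrow> 'a set \<Rightarrow> 'a set \<Rightarrow> bool" where
  "basis M X B \<longleftrightarrow> indep M B \<and> B \<subseteq> X \<and>
     (\<forall>J. indep M J \<and> B \<subseteq> J \<and> J \<subseteq> X \<longrightarrow> J = B)"

definition base :: "'a matroid \<Rightarrow> 'a set \<Rightarrow> bool" where
  "base M B \<longleftrightarrow> basis M (carrier M) B"

definition is_matroid :: "'a matroid \<Rightarrow> bool" where
  "is_matroid M \<longleftrightarrow>
     (\<forall>I. indep M I \<longrightarrow> I \<subseteq> carrier M) \<and>
     indep M {} \<and>
     (\<forall>I J. indep M J \<and> I \<subseteq> J \<longrightarrow> indep M I) \<and>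
     (\<forall>I B. indep M I \<and> \<not> base M I \<and> base M B \<longrightarrow>
        (\<exists>x \<in> B - I. indep M (insert x I))) \<and>
     (\<forall>I X. indep M I \<and> I \<subseteq> X \<and> X \<subseteq> carrier M \<longrightarrow>
        (\<exists>J. I \<subseteq> J \<and> basis M X J))"

definition restrict :: "'a matroid \<Rightarrow> 'a set \<Rightarrow> 'a matroid" where
  "restrict M X = \<lparr>carrier = X, indep = (\<lambda>I. indep M I \<and> I \<subseteq> X)\<rparr>"

definition dual :: "'a matroid \<Rightarrow> 'a matroid" where
  "dual M = \<lparr>carrier = carrier M,
     indep = (\<lambda>I. \<exists>B. base M B \<and> I \<subseteq> carrier M - B)\<rparr>"

definition contract :: "'a matroid \<Rightarrow> 'a set \<Rightarrow> 'a matroid" where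
  "contract M X = dual (restrict (dual M) (carrier M - X))"

definition contract_to :: "'a matroid \<Rightarrow> 'a set \<Rightarrow> 'a matroid" where
  "contract_to M X = contract M (carrier M - X)"

definition circuit :: "'a matroid \<Rightarrow> 'a set \<Rightarrow> bool" where
  "circuit M C \<longleftrightarrow> C \<subseteq> carrier M \<and> \<not> indep M C \<and> (\<forall>D. D \<subset> C \<longrightarrow> indep M D)"

definition finitary :: "'a matroid \<Rightarrow> bool" where
  "finitary M \<longleftrightarrow> (\<forall>C. circuit M C \<longrightarrow> finite C)"

definition cofinitary :: "'a matroid \<Rightarrow> bool" where
  "cofinitary M \<longleftrightarrow> finitary (dual M)"

definition loop :: "'a matroid \<Rightarrow> 'a \<Rightarrow> bool" where
  "loop M e \<longleftrightarrow> e \<in> carrier M \<and> \<not> indep M {e}"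

definition wave :: "'a matroid \<Rightarrow> 'a matroid \<Rightarrow> 'a set \<Rightarrow> bool" where
  "wave M N W \<longleftrightarrow> W \<subseteq> carrier M \<and>
     (\<exists>B. base (restrict M W) B \<and> indep (contract_to N W) B)"

definition wave_union :: "'a matroid \<Rightarrow> 'a matroid \<Rightarrow> 'a set" where
  "wave_union M N = \<Union>{W. wave M N W}"

text \<open>\<open>cond+(M,N)\<close>: \<open>W(M,N)\<close> consists of \<open>M\<close>-loops and \<open>r(N.W(M,N)) = 0\<close>,
  i.e. the empty set is a base of \<open>N.W(M,N)\<close>.\<close>
definition cond_plus :: "'a matroid \<Rightarrow> 'a matroid \<Rightarrow> bool" where
  "cond_plus M N \<longleftrightarrow> (\<forall>e \<in> wave_union M N. loop M e) \<and>
     base (contract_to N (wave_union M N)) {}"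

end

theory Submission
  imports Defs
begin


context
  fixes M :: "'a matroid"
  assumes mat: "is_matroid M"
begin

lemma m_sub_carrier: "indep M I \<Longrightarrow> I \<subseteq> carrier M"
  using mat[unfolded is_matroid_def, THEN conjunct1] by blast
lemma m_empty: "indep M {}"
  using mat[unfolded is_matroid_def, THEN conjunct2, THEN conjunct1] by blast
lemma m_mono: "indep M J \<Longrightarrow> I \<subseteq> J \<Longrightarrow> indep M I"
  using mat[unfolded is_matroid_def, THEN conjunct2, THEN conjunct2, THEN conjunct1] by blast
lemma m_aug: "indep M I \<Longrightarrow> \<not> base M I \<Longrightarrow> base M B \<Longrightarrow> \<exists>x\<in>B-I. indep M (insert x I)"
  using mat[unfolded is_matroid_def, THEN conjunct2, THEN conjunct2, THEN conjunct2, THEN conjunct1] by blast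
lemma m_IM: "indep M I \<Longrightarrow> I \<subseteq> X \<Longrightarrow> X \<subseteq> carrier M \<Longrightarrow> \<exists>J. I \<subseteq> J \<and> basis M X J"
  using mat[unfolded is_matroid_def, THEN conjunct2, THEN conjunct2, THEN conjunct2, THEN conjunct2] by blast

lemma basis_indep: "basis M X J \<Longrightarrow> indep M J" unfolding basis_def by blast
lemma basis_sub: "basis M X J \<Longrightarrow> J \<subseteq> X" unfolding basis_def by blast
lemma basis_max: "basis M X J \<Longrightarrow> z \<in> X \<Longrightarrow> z \<notin> J \<Longrightarrow> \<not> indep M (insert z J)"
  unfolding basis_def by blast
lemma basisI: "indep M J \<Longrightarrow> J \<subseteq> X \<Longrightarrow> (\<And>z. z \<in> X \<Longrightarrow> z \<notin> J \<Longrightarrow> \<not> indep M (insert z J)) \<Longrightarrow> basis M X J"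
  unfolding basis_def
proof (intro conjI allI impI)
  fix J' assume h: "indep M J" "J \<subseteq> X" "(\<And>z. z \<in> X \<Longrightarrow> z \<notin> J \<Longrightarrow> \<not> indep M (insert z J))"
    "indep M J' \<and> J \<subseteq> J' \<and> J' \<subseteq> X"
  show "J' = J"
  proof (rule ccontr)
    assume "J' \<noteq> J"
    then obtain z where "z \<in> J'" "z \<notin> J" using h by blast
    hence "indep M (insert z J)" using h m_mono[of J' "insert z J"] by blast
    thus False using h \<open>z \<in> J'\<close> \<open>z \<notin> J\<close> by blast
  qed
qed auto

lemma base_basis: "base M B \<longleftrightarrow> basis M (carrier M) B" unfolding base_def by simp

lemma base_indep: "base M B \<Longrightarrow> indep M B" unfolding base_def basis_def by blast
lemma base_max: "base M B \<Longrightarrow> z \<notin> B \<Longrightarrow> \<not> indep M (insert z B)"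
  unfolding base_def basis_def using m_sub_carrier by blast
lemma baseI: "indep M B \<Longrightarrow> (\<And>z. z \<in> carrier M \<Longrightarrow> z \<notin> B \<Longrightarrow> \<not> indep M (insert z B)) \<Longrightarrow> base M B"
  unfolding base_basis by (rule basisI) (auto dest: m_sub_carrier)

lemma base_exists: "\<exists>B. base M B"
  using m_IM[OF m_empty, of "carrier M"] unfolding base_def by auto

lemma extend_base: "indep M I \<Longrightarrow> \<exists>B. base M B \<and> I \<subseteq> B"
  using m_IM[of I "carrier M"] m_sub_carrier unfolding base_def by auto

lemma restr_aug:
  assumes I: "indep M I" "I \<subseteq> X" and X: "X \<subseteq> carrier M" and w: "w \<in> X" "w \<notin> I" "indep M (insert w I)"
    and B: "basis M X B"
  shows "\<exists>z\<in>B-I. indep M (insert z I)"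
proof -
  obtain Bh where Bh: "base M Bh" "B \<subseteq> Bh" using extend_base[OF basis_indep[OF B]] by blast
  have Bhi: "indep M Bh" using base_indep[OF Bh(1)] .
  have BhE: "Bh \<subseteq> carrier M" using m_sub_carrier[OF Bhi] .
  have BX: "B \<subseteq> X" using basis_sub[OF B] .
  have BhX: "Bh \<inter> X \<subseteq> B"
  proof
    fix z assume z: "z \<in> Bh \<inter> X"
    show "z \<in> B"
    proof (rule ccontr)
      assume zB: "z \<notin> B"
      have "insert z B \<subseteq> Bh" using Bh(2) z by blast
      hence "indep M (insert z B)" using m_mono[OF Bhi] by blast
      thus False using basis_max[OF B _ zB] z by blast
    qed
  qed
  have sub1: "I \<union> (Bh - X) \<subseteq> carrier M" using I(2) X BhE by blast
  obtain J' where J': "I \<subseteq> J'" "basis M (I \<union> (Bh - X)) J'"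
    using m_IM[OF I(1) _ sub1] by blast
  have J'sub: "J' \<subseteq> I \<union> (Bh - X)" using basis_sub[OF J'(2)] .
  have J'i: "indep M J'" using basis_indep[OF J'(2)] .
  show ?thesis
  proof (cases "base M J'")
    case False
    then obtain z where z: "z \<in> Bh" "z \<notin> J'" "indep M (insert z J')"
      using m_aug[OF J'i False Bh(1)] by blast
    have "z \<notin> Bh - X"
    proof
      assume "z \<in> Bh - X"
      hence "z \<in> I \<union> (Bh - X)" by blast
      thus False using basis_max[OF J'(2) _ z(2)] z(3) by blast
    qed
    hence zB: "z \<in> B" using z(1) BhX by blast
    have zI: "z \<notin> I" using z(2) J'(1) by blast
    have "insert z I \<subseteq> insert z J'" using J'(1) by blast
    hence "indep M (insert z I)" using m_mono[OF z(3)] by blast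
    thus ?thesis using zB zI by blast
  next
    case True
    have J'X: "J' \<inter> X \<subseteq> I" using J'sub by blast
    have sub2: "insert w I \<union> (J' - X) \<subseteq> carrier M"
      using w(1) X I(2) m_sub_carrier[OF J'i] by blast
    obtain J1 where J1: "insert w I \<subseteq> J1" "basis M (insert w I \<union> (J' - X)) J1"
      using m_IM[OF w(3) _ sub2] by blast
    have J1sub: "J1 \<subseteq> insert w I \<union> (J' - X)" using basis_sub[OF J1(2)] .
    have J1i: "indep M J1" using basis_indep[OF J1(2)] .
    have J1b: "base M J1"
    proof (rule ccontr)
      assume nb: "\<not> base M J1"
      obtain z where z: "z \<in> J'" "z \<notin> J1" "indep M (insert z J1)"
        using m_aug[OF J1i nb True] by blast
      have "z \<notin> I" using z(2) J1(1) by blast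
      hence "z \<in> J' - X" using z(1) J'X by blast
      hence "z \<in> insert w I \<union> (J' - X)" by blast
      thus False using basis_max[OF J1(2) _ z(2)] z(3) by blast
    qed
    have J1X: "J1 \<inter> X \<subseteq> insert w I" using J1sub by blast
    define B2 where "B2 = B \<union> (J1 - X)"
    have J1sub': "J1 - X \<subseteq> Bh - X" using J1sub J'sub w(1) I(2) by blast
    have "B2 \<subseteq> Bh" unfolding B2_def using J1sub' Bh(2) by blast
    hence B2i: "indep M B2" using m_mono[OF Bhi] by blast
    have B2b: "base M B2"
    proof (rule ccontr)
      assume nb: "\<not> base M B2"
      obtain z where z: "z \<in> J1" "z \<notin> B2" "indep M (insert z B2)"
        using m_aug[OF B2i nb J1b] by blast
      have zX: "z \<in> X" using z(1,2) unfolding B2_def by blast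
      have zB: "z \<notin> B" using z(2) unfolding B2_def by blast
      have "insert z B \<subseteq> insert z B2" unfolding B2_def by blast
      hence "indep M (insert z B)" using m_mono[OF z(3)] by blast
      thus False using basis_max[OF B zX zB] by blast
    qed
    define I0 where "I0 = I \<union> (J1 - X)"
    have "I0 \<subseteq> J1" unfolding I0_def using J1(1) by blast
    hence I0i: "indep M I0" using m_mono[OF J1i] by blast
    have I0nb: "\<not> base M I0"
    proof
      assume b0: "base M I0"
      have wI0: "w \<notin> I0" unfolding I0_def using w by blast
      have "insert w I0 \<subseteq> J1" using J1(1) unfolding I0_def by blast
      hence "indep M (insert w I0)" using m_mono[OF J1i] by blast
      thus False using base_max[OF b0 wI0] by blast
    qed
    obtain z where z: "z \<in> B2" "z \<notin> I0" "indep M (insert z I0)" using m_aug[OF I0i I0nb B2b] by blast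
    have zB: "z \<in> B" "z \<notin> I" using z(1,2) unfolding B2_def I0_def by blast+
    have "insert z I \<subseteq> insert z I0" unfolding I0_def by blast
    hence "indep M (insert z I)" using m_mono[OF z(3)] by blast
    thus ?thesis using zB by blast
  qed
qed

end


context
  fixes M :: "'a matroid"
  assumes mat: "is_matroid M"
begin

lemma basis_exch_card_aux:
  assumes X: "X \<subseteq> carrier M" and J: "basis M X J"
  shows "\<forall>I. basis M X I \<longrightarrow> finite (I - J) \<longrightarrow> card (I - J) = n \<longrightarrow> finite (J - I) \<and> card (J - I) \<le> n"
proof (induction n)
  case 0
  show ?case
  proof (intro allI impI)
    fix I assume I: "basis M X I" "finite (I - J)" "card (I - J) = 0"
    hence "I \<subseteq> J" by auto
    hence "J = I" using I(1) basis_indep[OF mat J] basis_sub[OF mat J] unfolding basis_def by blast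
    thus "finite (J - I) \<and> card (J - I) \<le> 0" by simp
  qed
next
  case (Suc n)
  show ?case
  proof (intro allI impI)
    fix I assume I: "basis M X I" "finite (I - J)" "card (I - J) = Suc n"
    have Ii: "indep M I" using basis_indep[OF mat I(1)] .
    have IX: "I \<subseteq> X" using basis_sub[OF mat I(1)] .
    have JX: "J \<subseteq> X" using basis_sub[OF mat J] .
    obtain y where y: "y \<in> I" "y \<notin> J" using I(3) card_eq_0_iff[of "I - J"]
      by (metis Diff_eq_empty_iff card_0_eq I(2) nat.distinct(1) subsetI)
    define I' where "I' = I - {y}"
    have I'i: "indep M I'" unfolding I'_def using m_mono[OF mat Ii] by blast
    have yI': "insert y I' = I" "y \<notin> I'" unfolding I'_def using y by blast+
    have I'X: "I' \<subseteq> X" unfolding I'_def using IX by blast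
    have yX: "y \<in> X" using IX y by blast
    have "indep M (insert y I')" using yI' Ii by simp
    then obtain z where z: "z \<in> J" "z \<notin> I'" "indep M (insert z I')"
      using restr_aug[OF mat I'i I'X X yX yI'(2) _ J] by blast
    have zy: "z \<noteq> y" using z y by blast
    have zI: "z \<notin> I" using z zy unfolding I'_def by blast
    define I'' where "I'' = insert z I'"
    have I''i: "indep M I''" using z(3) unfolding I''_def .
    have I''X: "I'' \<subseteq> X" unfolding I''_def I'_def using IX JX z by blast
    have I''b: "basis M X I''"
    proof (rule basisI[OF mat I''i I''X])
      fix u assume u: "u \<in> X" "u \<notin> I''"
      show "\<not> indep M (insert u I'')"
      proof
        assume "indep M (insert u I'')"
        then obtain v where v: "v \<in> I" "v \<notin> I''" "indep M (insert v I'')"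
          using restr_aug[OF mat I''i I''X X u _ I(1)] by blast
        have "v = y" using v unfolding I''_def I'_def by blast
        hence "insert v I'' = insert z I" unfolding I''_def I'_def using y by blast
        hence "indep M (insert z I)" using v by simp
        moreover have "z \<in> X" using z JX by blast
        ultimately show False using basis_max[OF mat I(1) _ zI] by blast
      qed
    qed
    have e1: "I'' - J = (I - J) - {y}" unfolding I''_def I'_def using z by blast
    have f1: "finite (I'' - J)" using e1 I(2) by simp
    have c1: "card (I'' - J) = n" using e1 I(2,3) y by simp
    have IH: "finite (J - I'') \<and> card (J - I'') \<le> n" using Suc.IH I''b f1 c1 by blast
    have e2: "J - I'' = (J - I) - {z}" unfolding I''_def I'_def using y by blast
    have zJI: "z \<in> J - I" using z zI by blast
    have fin: "finite (J - I)" using IH e2 finite_Diff2[of "{z}" "J - I"] by simp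
    have "card (J - I'') = card (J - I) - 1" using e2 zJI fin by simp
    moreover have "card (J - I) \<ge> 1" using zJI fin by (metis One_nat_def Suc_leI card_gt_0_iff empty_iff)
    ultimately have "card (J - I) \<le> Suc n" using IH by linarith
    thus "finite (J - I) \<and> card (J - I) \<le> Suc n" using fin by blast
  qed
qed

lemma basis_exch_card:
  assumes "X \<subseteq> carrier M" "basis M X I" "basis M X J" "finite (I - J)"
  shows "finite (J - I) \<and> card (J - I) \<le> card (I - J)"
  using basis_exch_card_aux[OF assms(1,3), of "card (I - J)"] assms by blast

lemma aug_finite:
  assumes I: "indep M I" and J: "indep M J" and f: "finite (I - J)" "finite (J - I)"
    and c: "card (I - J) < card (J - I)"
  shows "\<exists>z\<in>J - I. indep M (insert z I)"
proof (rule ccontr)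
  assume na: "\<not> ?thesis"
  define X where "X = I \<union> J"
  have XE: "X \<subseteq> carrier M" unfolding X_def using m_sub_carrier[OF mat I] m_sub_carrier[OF mat J] by blast
  have Ib: "basis M X I"
  proof (rule basisI[OF mat I])
    show "I \<subseteq> X" unfolding X_def by blast
    fix u assume "u \<in> X" "u \<notin> I"
    thus "\<not> indep M (insert u I)" using na unfolding X_def by blast
  qed
  obtain J' where J': "J \<subseteq> J'" "basis M X J'" using m_IM[OF mat J _ XE] unfolding X_def by blast
  have J'sub: "J' \<subseteq> I \<union> J" using basis_sub[OF mat J'(2)] unfolding X_def .
  have s1: "I - J' \<subseteq> I - J" using J' by blast
  have f1: "finite (I - J')" using finite_subset[OF s1 f(1)] .
  have r: "finite (J' - I) \<and> card (J' - I) \<le> card (I - J')"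
    using basis_exch_card[OF XE Ib J'(2) f1] .
  have "card (J - I) \<le> card (J' - I)" using r J'(1) by (intro card_mono) auto
  also have "\<dots> \<le> card (I - J')" using r by blast
  also have "\<dots> \<le> card (I - J)" using card_mono[OF f(1) s1] .
  finally show False using c by simp
qed

lemma finitary_indep:
  assumes fin: "finitary M" and IE: "I \<subseteq> carrier M"
    and h: "\<And>F. finite F \<Longrightarrow> F \<subseteq> I \<Longrightarrow> indep M F"
  shows "indep M I"
proof (rule ccontr)
  assume nI: "\<not> indep M I"
  obtain K where K: "basis M I K" using m_IM[OF mat m_empty[OF mat] _ IE] by blast
  have Ki: "indep M K" using basis_indep[OF mat K] .
  have KI: "K \<subseteq> I" using basis_sub[OF mat K] .
  obtain x where x: "x \<in> I" "x \<notin> K" using nI Ki KI by (metis subsetI subset_antisym)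
  have Kx: "\<not> indep M (insert x K)" using basis_max[OF mat K x] .
  obtain B where B: "base M B" "K \<subseteq> B" using extend_base[OF mat Ki] by blast
  have Bi: "indep M B" using base_indep[OF mat B(1)] .
  have xB: "x \<notin> B" using Kx m_mono[OF mat Bi] B(2) by blast
  define C where "C = insert x {y \<in> B. indep M (insert x (B - {y}))}"
  have CI: "C \<subseteq> I"
  proof
    fix y assume "y \<in> C"
    hence "y = x \<or> (y \<in> B \<and> indep M (insert x (B - {y})))" unfolding C_def by blast
    thus "y \<in> I"
    proof
      assume "y = x" thus ?thesis using x by simp
    next
      assume yB: "y \<in> B \<and> indep M (insert x (B - {y}))"
      show ?thesis
      proof (rule ccontr)
        assume "y \<notin> I"
        hence "insert x K \<subseteq> insert x (B - {y})" using B(2) KI by blast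
        thus False using Kx m_mono[OF mat] yB by blast
      qed
    qed
  qed
  have xE: "x \<in> carrier M" using x IE by blast
  have CE: "C \<subseteq> carrier M" using CI IE by blast
  have Cdep: "\<not> indep M C"
  proof
    assume Ci: "indep M C"
    define X' where "X' = insert x B"
    have X'E: "X' \<subseteq> carrier M" unfolding X'_def using xE m_sub_carrier[OF mat Bi] by blast
    have CX': "C \<subseteq> X'" unfolding C_def X'_def by blast
    obtain J where J: "C \<subseteq> J" "basis M X' J" using m_IM[OF mat Ci CX' X'E] by blast
    have Ji: "indep M J" using basis_indep[OF mat J(2)] .
    have JX': "J \<subseteq> X'" using basis_sub[OF mat J(2)] .
    have X'dep: "\<not> indep M X'" unfolding X'_def using base_max[OF mat B(1) xB] .
    obtain y where y: "y \<in> X'" "y \<notin> J" using X'dep Ji JX' by (metis subsetI subset_antisym)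
    have xC: "x \<in> C" unfolding C_def by blast
    have yx: "y \<noteq> x" using y J(1) xC by blast
    have yB: "y \<in> B" using y yx unfolding X'_def by blast
    have Jb: "base M J"
    proof (rule ccontr)
      assume nb: "\<not> base M J"
      obtain z where z: "z \<in> B" "z \<notin> J" "indep M (insert z J)" using m_aug[OF mat Ji nb B(1)] by blast
      have "z \<in> X'" using z unfolding X'_def by blast
      thus False using basis_max[OF mat J(2) _ z(2)] z(3) by blast
    qed
    have B0i: "indep M (B - {y})" using m_mono[OF mat Bi] by blast
    have B0nb: "\<not> base M (B - {y})"
    proof
      assume "base M (B - {y})"
      moreover have "insert y (B - {y}) = B" using yB by blast
      ultimately show False using base_max[OF mat, of "B - {y}" y] Bi by auto
    qed
    obtain z where z: "z \<in> J" "z \<notin> B - {y}" "indep M (insert z (B - {y}))"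
      using m_aug[OF mat B0i B0nb Jb] by blast
    have "z \<noteq> y" using z y by blast
    hence "z = x" using z JX' unfolding X'_def by blast
    hence "y \<in> C" using z(3) yB unfolding C_def by blast
    thus False using y J(1) by blast
  qed
  have Ccirc: "circuit M C" unfolding circuit_def
  proof (intro conjI allI impI)
    show "C \<subseteq> carrier M" using CE .
    show "\<not> indep M C" using Cdep .
    fix D assume D: "D \<subset> C"
    show "indep M D"
    proof (cases "x \<in> D")
      case False
      hence "D \<subseteq> B" using D unfolding C_def by blast
      thus ?thesis using m_mono[OF mat Bi] by blast
    next
      case True
      obtain y where y: "y \<in> C" "y \<notin> D" using D by blast
      have yx: "y \<noteq> x" using y True by blast
      hence yB: "y \<in> B" "indep M (insert x (B - {y}))" using y unfolding C_def by blast+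
      have "D \<subseteq> insert x (B - {y})" using D y unfolding C_def by blast
      thus ?thesis using m_mono[OF mat yB(2)] by blast
    qed
  qed
  have "finite C" using fin Ccirc unfolding finitary_def by blast
  thus False using h[OF _ CI] Cdep by blast
qed

lemma base_exchange_base:
  assumes B: "base M B" and x: "x \<in> B" and y: "y \<notin> B" and i: "indep M (insert y (B - {x}))"
  shows "base M (insert y (B - {x}))"
proof (rule ccontr)
  assume nb: "\<not> base M (insert y (B - {x}))"
  obtain z where z: "z \<in> B" "z \<notin> insert y (B - {x})" "indep M (insert z (insert y (B - {x})))"
    using m_aug[OF mat i nb B] by blast
  have "z = x" using z by blast
  hence "insert z (insert y (B - {x})) = insert y B" using x by blast
  thus False using z(3) base_max[OF mat B y] by simp
qed

lemma indep_dual: "indep (dual M) I \<longleftrightarrow> (\<exists>B. base M B \<and> I \<subseteq> carrier M - B)"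
  unfolding dual_def by simp
lemma carrier_dual: "carrier (dual M) = carrier M"
  unfolding dual_def by simp

lemma cofinitary_coindep:
  assumes cof: "cofinitary M" and DE: "D \<subseteq> carrier M"
    and h: "\<And>F. finite F \<Longrightarrow> F \<subseteq> D \<Longrightarrow> \<exists>B. base M B \<and> F \<inter> B = {}"
  shows "\<exists>B. base M B \<and> D \<inter> B = {}"
proof (rule ccontr)
  assume nD: "\<not> ?thesis"
  have sub: "carrier M - D \<subseteq> carrier M" by blast
  obtain K where K: "basis M (carrier M - D) K" using m_IM[OF mat m_empty[OF mat] _ sub] by blast
  have Ki: "indep M K" using basis_indep[OF mat K] .
  have KD: "K \<subseteq> carrier M - D" using basis_sub[OF mat K] .
  have Knb: "\<not> base M K" using nD KD by blast
  obtain B where B: "base M B" "K \<subseteq> B" using extend_base[OF mat Ki] by blast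
  have Bi: "indep M B" using base_indep[OF mat B(1)] .
  have BE: "B \<subseteq> carrier M" using m_sub_carrier[OF mat Bi] .
  obtain x where x: "x \<in> B" "x \<notin> K" using Knb B by (metis subsetI subset_antisym)
  have xD: "x \<in> D"
  proof (rule ccontr)
    assume "x \<notin> D"
    hence "x \<in> carrier M - D" using x BE by blast
    moreover have "indep M (insert x K)" using m_mono[OF mat Bi] B(2) x by blast
    ultimately show False using basis_max[OF mat K _ x(2)] by blast
  qed
  define C where "C = insert x {y \<in> carrier M - B. indep M (insert y (B - {x}))}"
  have CD: "C \<subseteq> D"
  proof
    fix y assume "y \<in> C"
    hence "y = x \<or> (y \<in> carrier M - B \<and> indep M (insert y (B - {x})))" unfolding C_def by blast
    thus "y \<in> D"
    proof
      assume "y = x" thus ?thesis using xD by simp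
    next
      assume yy: "y \<in> carrier M - B \<and> indep M (insert y (B - {x}))"
      show ?thesis
      proof (rule ccontr)
        assume "y \<notin> D"
        hence yK: "y \<in> carrier M - D" "y \<notin> K" using yy B(2) by blast+
        have "insert y K \<subseteq> insert y (B - {x})" using B(2) x by blast
        hence "indep M (insert y K)" using m_mono[OF mat] yy by blast
        thus False using basis_max[OF mat K yK] by blast
      qed
    qed
  qed
  have CE: "C \<subseteq> carrier M" using CD DE by blast
  have Cdep: "\<not> indep (dual M) C"
  proof
    assume "indep (dual M) C"
    then obtain B' where B': "base M B'" "C \<subseteq> carrier M - B'" unfolding indep_dual by blast
    have B0i: "indep M (B - {x})" using m_mono[OF mat Bi] by blast
    have B0nb: "\<not> base M (B - {x})"
    proof
      assume "base M (B - {x})"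
      moreover have "insert x (B - {x}) = B" using x by blast
      ultimately show False using base_max[OF mat, of "B - {x}" x] Bi by auto
    qed
    obtain z where z: "z \<in> B'" "z \<notin> B - {x}" "indep M (insert z (B - {x}))"
      using m_aug[OF mat B0i B0nb B'(1)] by blast
    have xC: "x \<in> C" unfolding C_def by blast
    have "z \<noteq> x" using z xC B' by blast
    moreover have "z \<in> carrier M" using z m_sub_carrier[OF mat base_indep[OF mat B'(1)]] by blast
    ultimately have "z \<in> C" using z unfolding C_def by blast
    thus False using z B' by blast
  qed
  have Ccirc: "circuit (dual M) C" unfolding circuit_def carrier_dual
  proof (intro conjI allI impI)
    show "C \<subseteq> carrier M" using CE .
    show "\<not> indep (dual M) C" using Cdep .
    fix D' assume D': "D' \<subset> C"
    show "indep (dual M) D'"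
    proof (cases "x \<in> D'")
      case False
      hence "D' \<subseteq> carrier M - B" using D' unfolding C_def by blast
      thus ?thesis unfolding indep_dual using B(1) by blast
    next
      case True
      obtain y where y: "y \<in> C" "y \<notin> D'" using D' by blast
      have yx: "y \<noteq> x" using y True by blast
      hence yB: "y \<in> carrier M - B" "indep M (insert y (B - {x}))" using y unfolding C_def by blast+
      have bb: "base M (insert y (B - {x}))" using base_exchange_base[OF B(1) x(1) _ yB(2)] yB(1) by blast
      have "D' \<subseteq> carrier M - insert y (B - {x})" using D' y yx CE unfolding C_def by blast
      thus ?thesis unfolding indep_dual using bb by blast
    qed
  qed
  have "finite C" using cof Ccirc unfolding cofinitary_def finitary_def by blast
  then obtain B' where "base M B'" "C \<inter> B' = {}" using h[OF _ CD] by blast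
  hence "indep (dual M) C" unfolding indep_dual using CE by blast
  thus False using Cdep by blast
qed

end


definition rankf :: "'a set \<Rightarrow> ('a set \<Rightarrow> nat) \<Rightarrow> bool" where
  "rankf F r \<longleftrightarrow> r {} = 0 \<and>
     (\<forall>X e. X \<subseteq> F \<longrightarrow> e \<in> F \<longrightarrow> r X \<le> r (insert e X) \<and> r (insert e X) \<le> Suc (r X)) \<and>
     (\<forall>X Y. X \<subseteq> F \<longrightarrow> Y \<subseteq> F \<longrightarrow> r (X \<inter> Y) + r (X \<union> Y) \<le> r X + r Y)"

lemma rankf_empty: "rankf F r \<Longrightarrow> r {} = 0" unfolding rankf_def by (elim conjE)
lemma rankf_unit: assumes "rankf F r" "X \<subseteq> F" "e \<in> F"
  shows "r X \<le> r (insert e X) \<and> r (insert e X) \<le> Suc (r X)"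
proof -
  have h: "\<forall>X e. X \<subseteq> F \<longrightarrow> e \<in> F \<longrightarrow> r X \<le> r (insert e X) \<and> r (insert e X) \<le> Suc (r X)"
    using assms(1) unfolding rankf_def by (elim conjE)
  show ?thesis using h[rule_format, OF assms(2,3)] .
qed
lemma rankf_submod: assumes "rankf F r" "X \<subseteq> F" "Y \<subseteq> F"
  shows "r (X \<inter> Y) + r (X \<union> Y) \<le> r X + r Y"
proof -
  have h: "\<forall>X Y. X \<subseteq> F \<longrightarrow> Y \<subseteq> F \<longrightarrow> r (X \<inter> Y) + r (X \<union> Y) \<le> r X + r Y"
    using assms(1) unfolding rankf_def by (elim conjE)
  show ?thesis using h[rule_format, OF assms(2,3)] .
qed

lemma rankf_subset: "rankf F r \<Longrightarrow> G \<subseteq> F \<Longrightarrow> rankf G r"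
  unfolding rankf_def
proof (elim conjE, intro conjI allI impI)
  fix X e assume "\<forall>X e. X \<subseteq> F \<longrightarrow> e \<in> F \<longrightarrow> r X \<le> r (insert e X) \<and> r (insert e X) \<le> Suc (r X)"
    "G \<subseteq> F" "X \<subseteq> G" "e \<in> G"
  thus "r X \<le> r (insert e X)" "r (insert e X) \<le> Suc (r X)" by (meson order_trans subsetD)+
next
  fix X Y assume "\<forall>X Y. X \<subseteq> F \<longrightarrow> Y \<subseteq> F \<longrightarrow> r (X \<inter> Y) + r (X \<union> Y) \<le> r X + r Y"
    "G \<subseteq> F" "X \<subseteq> G" "Y \<subseteq> G"
  thus "r (X \<inter> Y) + r (X \<union> Y) \<le> r X + r Y" by (meson order_trans)
qed

lemma rankf_mono_aux:
  assumes r: "rankf F r" and fin: "finite D"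
  shows "X \<subseteq> F \<Longrightarrow> D \<subseteq> F \<Longrightarrow> r X \<le> r (X \<union> D)"
  using fin
proof (induction D rule: finite_induct)
  case empty thus ?case by simp
next
  case (insert e D)
  have "r X \<le> r (X \<union> D)" using insert by blast
  also have "\<dots> \<le> r (insert e (X \<union> D))" using rankf_unit[OF r, of "X \<union> D" e] insert by blast
  finally show ?case by simp
qed

lemma rankf_mono:
  assumes r: "rankf F r" and fin: "finite F" and XY: "X \<subseteq> Y" "Y \<subseteq> F"
  shows "r X \<le> r Y"
proof -
  have "Y = X \<union> (Y - X)" using XY by blast
  moreover have "finite (Y - X)" using finite_subset[OF _ fin, of "Y - X"] XY by blast
  moreover have "r X \<le> r (X \<union> (Y - X))"
    using rankf_mono_aux[OF r calculation(2)] XY by blast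
  ultimately show ?thesis by simp
qed

lemma rankf_card_aux:
  assumes r: "rankf F r" and fin: "finite X"
  shows "X \<subseteq> F \<Longrightarrow> r X \<le> card X"
  using fin
proof (induction X rule: finite_induct)
  case empty thus ?case using rankf_empty[OF r] by simp
next
  case (insert e X)
  thus ?case using rankf_unit[OF r, of X e] by simp
qed

lemma rankf_card: "rankf F r \<Longrightarrow> finite F \<Longrightarrow> X \<subseteq> F \<Longrightarrow> r X \<le> card X"
  using rankf_card_aux[of F r X] finite_subset[of X F] by blast

lemma rankf_union_le:
  assumes r: "rankf F r" and "X \<subseteq> F" "Y \<subseteq> F" "X \<inter> Y = {}"
  shows "r (X \<union> Y) \<le> r X + r Y"
  using rankf_submod[OF r assms(2,3)] assms(4) rankf_empty[OF r] by simp

lemma rankf_indep_sub: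
  assumes r: "rankf F r" and fin: "finite F" and I: "I \<subseteq> F" "r I = card I" and J: "J \<subseteq> I"
  shows "r J = card J"
proof -
  have fI: "finite I" using finite_subset[OF I(1) fin] .
  have fJ: "finite J" using finite_subset[OF J fI] .
  have JF: "J \<subseteq> F" using J I(1) by (rule order_trans)
  have IJF: "I - J \<subseteq> F" using I(1) by blast
  have dis: "J \<inter> (I - J) = {}" by blast
  have un: "J \<union> (I - J) = I" using J by blast
  have "r (J \<union> (I - J)) \<le> r J + r (I - J)" using rankf_union_le[OF r JF IJF dis] .
  hence a: "r I \<le> r J + r (I - J)" using un by simp
  have b: "r (I - J) \<le> card (I - J)" using rankf_card[OF r fin IJF] .
  have "card (J \<union> (I - J)) = card J + card (I - J)" using card_Un_disjoint[OF fJ _ dis] fI by simp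
  hence c: "card I = card J + card (I - J)" using un by simp
  have d: "r J \<le> card J" using rankf_card[OF r fin JF] .
  show ?thesis using a b c d I(2) by linarith
qed

lemma rankf_contract:
  assumes r: "rankf F r" and fin: "finite F" and e: "e \<in> F"
  shows "rankf (F - {e}) (\<lambda>X. r (insert e X) - r {e})"
  unfolding rankf_def
proof (intro conjI allI impI)
  show "r (insert e {}) - r {e} = 0" by simp
  fix X x assume X: "X \<subseteq> F - {e}" "x \<in> F - {e}"
  have eX: "insert e X \<subseteq> F" using X e by blast
  have xF: "x \<in> F" using X by blast
  have ge: "r {e} \<le> r (insert e X)" using rankf_mono[OF r fin _ eX] by blast
  have ii: "insert x (insert e X) = insert e (insert x X)" by blast
  have u: "r (insert e X) \<le> r (insert x (insert e X)) \<and> r (insert x (insert e X)) \<le> Suc (r (insert e X))"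
    using rankf_unit[OF r eX xF] .
  have u1: "r (insert e X) \<le> r (insert e (insert x X))" "r (insert e (insert x X)) \<le> Suc (r (insert e X))"
    using u ii by simp_all
  show "r (insert e X) - r {e} \<le> r (insert e (insert x X)) - r {e}" using u1 ge by arith
  show "r (insert e (insert x X)) - r {e} \<le> Suc (r (insert e X) - r {e})" using u1 ge by arith
next
  fix X Y assume X: "X \<subseteq> F - {e}" and Y: "Y \<subseteq> F - {e}"
  have eX: "insert e X \<subseteq> F" using X e by blast
  have eY: "insert e Y \<subseteq> F" using Y e by blast
  have eXY: "insert e (X \<inter> Y) \<subseteq> F" using X e by blast
  have eXY2: "insert e (X \<union> Y) \<subseteq> F" using X Y e by blast
  have s: "r (insert e X \<inter> insert e Y) + r (insert e X \<union> insert e Y) \<le> r (insert e X) + r (insert e Y)"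
    using rankf_submod[OF r eX eY] .
  have g1: "r {e} \<le> r (insert e (X \<inter> Y))" using rankf_mono[OF r fin _ eXY] by blast
  have g2: "r {e} \<le> r (insert e (X \<union> Y))" using rankf_mono[OF r fin _ eXY2] by blast
  have g3: "r {e} \<le> r (insert e X)" using rankf_mono[OF r fin _ eX] by blast
  have g4: "r {e} \<le> r (insert e Y)" using rankf_mono[OF r fin _ eY] by blast
  have q: "insert e X \<inter> insert e Y = insert e (X \<inter> Y)" "insert e X \<union> insert e Y = insert e (X \<union> Y)" by blast+
  show "r (insert e (X \<inter> Y)) - r {e} + (r (insert e (X \<union> Y)) - r {e}) \<le> r (insert e X) - r {e} + (r (insert e Y) - r {e})"
  proof -
    have "r (insert e (X \<inter> Y)) + r (insert e (X \<union> Y)) \<le> r (insert e X) + r (insert e Y)"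
      using s q by simp
    thus ?thesis using g1 g2 g3 g4 by arith
  qed
qed

lemma weak_duality:
  assumes r1: "rankf F r1" and r2: "rankf F r2" and fin: "finite F"
    and I: "I \<subseteq> F" "r1 I = card I" "r2 I = card I" and X: "X \<subseteq> F"
  shows "card I \<le> r1 X + r2 (F - X)"
proof -
  have fI: "finite I" using finite_subset[OF I(1) fin] .
  have un: "(I \<inter> X) \<union> (I - X) = I" by blast
  have "card ((I \<inter> X) \<union> (I - X)) = card (I \<inter> X) + card (I - X)"
    using fI by (intro card_Un_disjoint) auto
  hence "card I = card (I \<inter> X) + card (I - X)" using un by simp
  also have "card (I \<inter> X) = r1 (I \<inter> X)" using rankf_indep_sub[OF r1 fin I(1,2), of "I \<inter> X"] by simp
  also have "card (I - X) = r2 (I - X)" using rankf_indep_sub[OF r2 fin I(1,3), of "I - X"] by simp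
  also have "r1 (I \<inter> X) \<le> r1 X" using rankf_mono[OF r1 fin, of "I \<inter> X" X] X by blast
  also have "r2 (I - X) \<le> r2 (F - X)" using rankf_mono[OF r2 fin, of "I - X" "F - X"] I by blast
  finally show ?thesis by simp
qed

lemma edmonds:
  assumes fin: "finite F"
  shows "rankf F r1 \<Longrightarrow> rankf F r2 \<Longrightarrow>
    \<exists>I X. I \<subseteq> F \<and> X \<subseteq> F \<and> r1 I = card I \<and> r2 I = card I \<and> r1 X + r2 (F - X) \<le> card I"
  using fin
proof (induction F arbitrary: r1 r2 rule: finite_induct)
  case empty
  thus ?case using rankf_empty[OF empty(1)] rankf_empty[OF empty(2)] by (intro exI[of _ "{}"]) simp
next
  case (insert e F)
  let ?G = "insert e F"
  have finG: "finite ?G" using insert by simp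
  have FG: "F \<subseteq> insert e F" by blast
  have d1: "rankf F r1" "rankf F r2" using rankf_subset[OF insert.prems(1) FG] rankf_subset[OF insert.prems(2) FG] .
  obtain Id Xd where D: "Id \<subseteq> F" "Xd \<subseteq> F" "r1 Id = card Id" "r2 Id = card Id"
    "r1 Xd + r2 (F - Xd) \<le> card Id"
    using insert.IH[OF d1] by blast
  have eXd: "e \<notin> Xd" using D insert by blast
  have GXd: "?G - Xd = insert e (F - Xd)" using eXd by blast
  have IdG: "Id \<subseteq> ?G" using D by blast
  have XdG: "Xd \<subseteq> ?G" using D by blast
  have le1: "r1 {e} \<le> 1" using rankf_unit[OF insert.prems(1), of "{}" e] rankf_empty[OF insert.prems(1)] by simp
  have le2: "r2 {e} \<le> 1" using rankf_unit[OF insert.prems(2), of "{}" e] rankf_empty[OF insert.prems(2)] by simp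
  show ?case
  proof (cases "r1 {e} = 0")
    case True
    have "r1 (Xd \<union> {e}) \<le> r1 Xd + r1 {e}"
      using rankf_union_le[OF insert.prems(1), of Xd "{e}"] XdG eXd by blast
    hence "r1 (insert e Xd) \<le> r1 Xd" using True by simp
    moreover have "?G - insert e Xd = F - Xd" using insert by blast
    ultimately have "r1 (insert e Xd) + r2 (?G - insert e Xd) \<le> card Id" using D by simp
    moreover have "insert e Xd \<subseteq> ?G" using XdG by blast
    ultimately show ?thesis using IdG D by blast
  next
    case n1: False
    show ?thesis
    proof (cases "r2 {e} = 0")
      case True
      have "r2 (F - Xd \<union> {e}) \<le> r2 (F - Xd) + r2 {e}"
        using rankf_union_le[OF insert.prems(2), of "F - Xd" "{e}"] eXd insert(2) by blast
      hence "r2 (?G - Xd) \<le> r2 (F - Xd)" using True GXd by simp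
      hence "r1 Xd + r2 (?G - Xd) \<le> card Id" using D by simp
      thus ?thesis using IdG XdG D by blast
    next
      case n2: False
      have e1: "r1 {e} = 1" and e2: "r2 {e} = 1" using n1 n2 le1 le2 by simp_all
      define c1 where "c1 = (\<lambda>X. r1 (insert e X) - r1 {e})"
      define c2 where "c2 = (\<lambda>X. r2 (insert e X) - r2 {e})"
      have GF: "?G - {e} = F" using insert by blast
      have cr1: "rankf F c1" using rankf_contract[OF insert.prems(1) finG, of e] GF unfolding c1_def by simp
      have cr2: "rankf F c2" using rankf_contract[OF insert.prems(2) finG, of e] GF unfolding c2_def by simp
      obtain Ic Xc where Cc: "Ic \<subseteq> F" "Xc \<subseteq> F" "c1 Ic = card Ic" "c2 Ic = card Ic"
        "c1 Xc + c2 (F - Xc) \<le> card Ic"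
        using insert.IH[OF cr1 cr2] by blast
      have eIc: "e \<notin> Ic" using Cc insert by blast
      have eXc: "e \<notin> Xc" using Cc insert by blast
      have fIc: "finite Ic" using finite_subset[OF Cc(1) insert(1)] .
      have m1: "r1 {e} \<le> r1 (insert e Ic)" using rankf_mono[OF insert.prems(1) finG, of "{e}" "insert e Ic"] Cc by blast
      have m2: "r2 {e} \<le> r2 (insert e Ic)" using rankf_mono[OF insert.prems(2) finG, of "{e}" "insert e Ic"] Cc by blast
      have I1: "r1 (insert e Ic) = card (insert e Ic)" using Cc(3) e1 m1 eIc fIc unfolding c1_def by simp
      have I2: "r2 (insert e Ic) = card (insert e Ic)" using Cc(4) e2 m2 eIc fIc unfolding c2_def by simp
      have IcG: "insert e Ic \<subseteq> ?G" using Cc by blast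
      have m3: "r1 {e} \<le> r1 (insert e Xc)" using rankf_mono[OF insert.prems(1) finG, of "{e}" "insert e Xc"] Cc by blast
      have m4: "r2 {e} \<le> r2 (insert e (F - Xc))" using rankf_mono[OF insert.prems(2) finG, of "{e}" "insert e (F - Xc)"] by blast
      have C': "r1 (insert e Xc) + r2 (insert e (F - Xc)) \<le> card Ic + 2"
        using Cc(5) m3 m4 e1 e2 unfolding c1_def c2_def by simp
      have s1: "r1 (Xd \<inter> insert e Xc) + r1 (Xd \<union> insert e Xc) \<le> r1 Xd + r1 (insert e Xc)"
        using rankf_submod[OF insert.prems(1), of Xd "insert e Xc"] XdG Cc by blast
      have s2: "r2 ((F - Xd) \<inter> insert e (F - Xc)) + r2 ((F - Xd) \<union> insert e (F - Xc)) \<le> r2 (F - Xd) + r2 (insert e (F - Xc))"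
        using rankf_submod[OF insert.prems(2), of "F - Xd" "insert e (F - Xc)"] by blast
      have q1: "Xd \<inter> insert e Xc = Xd \<inter> Xc" using eXd by blast
      have q2: "Xd \<union> insert e Xc = insert e (Xd \<union> Xc)" by blast
      have q3: "(F - Xd) \<inter> insert e (F - Xc) = ?G - insert e (Xd \<union> Xc)" using insert by blast
      have q4: "(F - Xd) \<union> insert e (F - Xc) = ?G - (Xd \<inter> Xc)" using insert eXd by blast
      define P where "P = Xd \<inter> Xc"
      define Q where "Q = insert e (Xd \<union> Xc)"
      have PG: "P \<subseteq> ?G" "Q \<subseteq> ?G" unfolding P_def Q_def using D Cc by blast+
      have sum: "(r1 P + r2 (?G - P)) + (r1 Q + r2 (?G - Q)) \<le> card Id + card Ic + 2"
        using s1 s2 q1 q2 q3 q4 C' D(5) unfolding P_def Q_def by simp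
      show ?thesis
      proof (cases "card Ic < card Id")
        case True
        hence "r1 P + r2 (?G - P) \<le> card Id \<or> r1 Q + r2 (?G - Q) \<le> card Id" using sum by linarith
        thus ?thesis using IdG D(3,4) PG by blast
      next
        case False
        have ci: "card (insert e Ic) = Suc (card Ic)" using eIc fIc by simp
        have "r1 P + r2 (?G - P) \<le> Suc (card Ic) \<or> r1 Q + r2 (?G - Q) \<le> Suc (card Ic)"
          using sum False by linarith
        hence "r1 P + r2 (?G - P) \<le> card (insert e Ic) \<or> r1 Q + r2 (?G - Q) \<le> card (insert e Ic)"
          using ci by simp
        thus ?thesis using IcG I1 I2 PG by blast
      qed
    qed
  qed
qed



definition rkK :: "'a matroid \<Rightarrow> 'a set \<Rightarrow> 'a set \<Rightarrow> nat" where
  "rkK N K Z = Max (card ` {Y. Y \<subseteq> Z \<and> indep N (Y \<union> K)})"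

definition kb :: "'a matroid \<Rightarrow> 'a set \<Rightarrow> 'a set \<Rightarrow> 'a set \<Rightarrow> bool" where
  "kb N K Z Y \<longleftrightarrow> Y \<subseteq> Z \<and> indep N (Y \<union> K) \<and> (\<forall>z\<in>Z - Y. \<not> indep N (insert z (Y \<union> K)))"

context
  fixes N :: "'a matroid" and K :: "'a set"
  assumes mat: "is_matroid N" and Ki: "indep N K"
begin

lemma rk_set_fin: "finite Z \<Longrightarrow> finite (card ` {Y. Y \<subseteq> Z \<and> indep N (Y \<union> K)})"
  by simp

lemma rk_set_ne: "card ` {Y. Y \<subseteq> Z \<and> indep N (Y \<union> K)} \<noteq> {}"
  using Ki by auto

lemma rk_le: "finite Z \<Longrightarrow> Y \<subseteq> Z \<Longrightarrow> indep N (Y \<union> K) \<Longrightarrow> card Y \<le> rkK N K Z"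
  unfolding rkK_def by (rule Max_ge[OF rk_set_fin]) auto

lemma rk_ex: "finite Z \<Longrightarrow> \<exists>Y. Y \<subseteq> Z \<and> indep N (Y \<union> K) \<and> card Y = rkK N K Z"
proof -
  assume f: "finite Z"
  have "rkK N K Z \<in> card ` {Y. Y \<subseteq> Z \<and> indep N (Y \<union> K)}"
    unfolding rkK_def using Max_in[OF rk_set_fin[OF f] rk_set_ne] .
  thus ?thesis by auto
qed

lemma card_diff_lt:
  assumes "finite A" "finite B" "card A < card B" shows "card (A - B) < card (B - A)"
proof -
  have "card A = card (A \<inter> B) + card (A - B)"
    using card_Int_Diff[OF assms(1), of B] by simp
  moreover have "card B = card (A \<inter> B) + card (B - A)"
    using card_Int_Diff[OF assms(2), of A] by (simp add: Int_commute)
  ultimately show ?thesis using assms(3) by linarith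
qed

lemma rk_kb:
  assumes f: "finite Z" and d: "Z \<inter> K = {}" and Y: "kb N K Z Y"
  shows "card Y = rkK N K Z"
proof -
  have YZ: "Y \<subseteq> Z" and Yi: "indep N (Y \<union> K)" and Ym: "\<forall>z\<in>Z - Y. \<not> indep N (insert z (Y \<union> K))"
    using Y unfolding kb_def by blast+
  have le: "card Y \<le> rkK N K Z" using rk_le[OF f YZ Yi] .
  obtain Y' where Y': "Y' \<subseteq> Z" "indep N (Y' \<union> K)" "card Y' = rkK N K Z" using rk_ex[OF f] by blast
  show ?thesis
  proof (rule ccontr)
    assume "card Y \<noteq> rkK N K Z"
    hence lt: "card Y < card Y'" using le Y'(3) by simp
    have fY: "finite Y" using finite_subset[OF YZ f] .
    have fY': "finite Y'" using finite_subset[OF Y'(1) f] .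
    have e1: "(Y \<union> K) - (Y' \<union> K) = Y - Y'" using YZ d by blast
    have e2: "(Y' \<union> K) - (Y \<union> K) = Y' - Y" using Y'(1) d by blast
    have c: "card ((Y \<union> K) - (Y' \<union> K)) < card ((Y' \<union> K) - (Y \<union> K))"
      using card_diff_lt[OF fY fY' lt] e1 e2 by simp
    obtain z where z: "z \<in> (Y' \<union> K) - (Y \<union> K)" "indep N (insert z (Y \<union> K))"
      using aug_finite[OF mat Yi Y'(2)] c e1 e2 fY fY' by auto
    have "z \<in> Z - Y" using z(1) Y'(1) by blast
    thus False using Ym z(2) by blast
  qed
qed

lemma rk_ext:
  assumes f: "finite Z" and YZ: "Y \<subseteq> Z" and Yi: "indep N (Y \<union> K)"
  shows "\<exists>Y'. Y \<subseteq> Y' \<and> kb N K Z Y'"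
proof -
  let ?P = "\<lambda>Y'. Y \<subseteq> Y' \<and> Y' \<subseteq> Z \<and> indep N (Y' \<union> K)"
  have P0: "?P Y" using YZ Yi by blast
  have bd: "\<forall>y. ?P y \<longrightarrow> card y < Suc (card Z)" using card_mono[OF f] by (simp add: le_imp_less_Suc)
  obtain Y' where Y': "?P Y'" "\<forall>y. ?P y \<longrightarrow> card y \<le> card Y'"
    using ex_has_greatest_nat[OF P0 bd] by blast
  have "kb N K Z Y'" unfolding kb_def
  proof (intro conjI ballI)
    show "Y' \<subseteq> Z" "indep N (Y' \<union> K)" using Y'(1) by blast+
    fix z assume z: "z \<in> Z - Y'"
    show "\<not> indep N (insert z (Y' \<union> K))"
    proof
      assume "indep N (insert z (Y' \<union> K))"
      hence i: "indep N (insert z Y' \<union> K)" by simp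
      have s1: "Y \<subseteq> insert z Y'" using Y'(1) by blast
      have s2: "insert z Y' \<subseteq> Z" using Y'(1) z by blast
      have "?P (insert z Y')" using i s1 s2 by simp
      hence "card (insert z Y') \<le> card Y'" using Y'(2) by blast
      moreover have "finite Y'" using finite_subset[OF _ f] Y'(1) by blast
      ultimately show False using z by simp
    qed
  qed
  thus ?thesis using Y'(1) by blast
qed

lemma rk_empty: "rkK N K {} = 0"
proof -
  have "{Y. Y \<subseteq> {} \<and> indep N (Y \<union> K)} = {{}}" using Ki by auto
  thus ?thesis unfolding rkK_def by simp
qed

lemma rk_rankf:
  assumes f: "finite Z" and d: "Z \<inter> K = {}"
  shows "rankf Z (rkK N K)"
  unfolding rankf_def
proof (intro conjI allI impI)
  show "rkK N K {} = 0" by (rule rk_empty)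
next
  fix X e assume X: "X \<subseteq> Z" "e \<in> Z"
  have fX: "finite X" using finite_subset[OF X(1) f] .
  have fXe: "finite (insert e X)" using fX by simp
  obtain Y where Y: "Y \<subseteq> X" "indep N (Y \<union> K)" "card Y = rkK N K X" using rk_ex[OF fX] by blast
  have "Y \<subseteq> insert e X" using Y(1) by blast
  hence "card Y \<le> rkK N K (insert e X)" using rk_le[OF fXe _ Y(2)] by blast
  thus "rkK N K X \<le> rkK N K (insert e X)" using Y(3) by simp
  obtain Y' where Y': "Y' \<subseteq> insert e X" "indep N (Y' \<union> K)" "card Y' = rkK N K (insert e X)"
    using rk_ex[OF fXe] by blast
  have s: "Y' - {e} \<subseteq> X" using Y'(1) by blast
  have i: "indep N ((Y' - {e}) \<union> K)" by (rule m_mono[OF mat Y'(2)]) blast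
  have "card (Y' - {e}) \<le> rkK N K X" using rk_le[OF fX s i] .
  moreover have "card Y' \<le> Suc (card (Y' - {e}))"
  proof -
    have fy: "finite Y'" using finite_subset[OF Y'(1) fXe] .
    hence "card Y' \<le> card (insert e (Y' - {e}))" by (intro card_mono) auto
    also have "\<dots> = Suc (card (Y' - {e}))" using fy by (intro card_insert_disjoint) auto
    finally show ?thesis .
  qed
  ultimately show "rkK N K (insert e X) \<le> Suc (rkK N K X)" using Y'(3) by simp
next
  fix X Y assume X: "X \<subseteq> Z" and Y: "Y \<subseteq> Z"
  have fXY: "finite (X \<inter> Y)" using finite_subset[OF _ f] X by blast
  have fXY2: "finite (X \<union> Y)" using finite_subset[OF _ f] X Y by blast
  have fX: "finite X" using finite_subset[OF X f] .
  have fY: "finite Y" using finite_subset[OF Y f] .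
  have k0: "indep N ({} \<union> K)" using Ki by simp
  have "\<exists>Y'. {} \<subseteq> Y' \<and> kb N K (X \<inter> Y) Y'" using rk_ext[OF fXY empty_subsetI k0] .
  then obtain Y0 where Y0: "kb N K (X \<inter> Y) Y0" by metis
  have Y0s: "Y0 \<subseteq> X \<inter> Y" "indep N (Y0 \<union> K)" using Y0 unfolding kb_def by blast+
  obtain Y1 where Y1: "Y0 \<subseteq> Y1" "kb N K (X \<union> Y) Y1" using rk_ext[OF fXY2 _ Y0s(2)] Y0s(1) by blast
  have Y1s: "Y1 \<subseteq> X \<union> Y" "indep N (Y1 \<union> K)" using Y1(2) unfolding kb_def by blast+
  have r0: "card Y0 = rkK N K (X \<inter> Y)" using rk_kb[OF fXY _ Y0] d X by blast
  have r1: "card Y1 = rkK N K (X \<union> Y)" using rk_kb[OF fXY2 _ Y1(2)] d X Y by blast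
  have "(Y1 \<inter> X) \<union> K \<subseteq> Y1 \<union> K" by blast
  hence ia: "indep N ((Y1 \<inter> X) \<union> K)" by (rule m_mono[OF mat Y1s(2)])
  have a: "card (Y1 \<inter> X) \<le> rkK N K X" using rk_le[OF fX _ ia] by blast
  have "(Y1 \<inter> Y) \<union> K \<subseteq> Y1 \<union> K" by blast
  hence ib: "indep N ((Y1 \<inter> Y) \<union> K)" by (rule m_mono[OF mat Y1s(2)])
  have b: "card (Y1 \<inter> Y) \<le> rkK N K Y" using rk_le[OF fY _ ib] by blast
  have c: "(Y1 \<inter> X) \<inter> (Y1 \<inter> Y) = Y0"
  proof
    show "Y0 \<subseteq> (Y1 \<inter> X) \<inter> (Y1 \<inter> Y)" using Y1(1) Y0s(1) by blast
    show "(Y1 \<inter> X) \<inter> (Y1 \<inter> Y) \<subseteq> Y0"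
    proof
      fix w assume w: "w \<in> (Y1 \<inter> X) \<inter> (Y1 \<inter> Y)"
      show "w \<in> Y0"
      proof (rule ccontr)
        assume "w \<notin> Y0"
        hence n: "\<not> indep N (insert w (Y0 \<union> K))" using Y0 w unfolding kb_def by blast
        have "insert w (Y0 \<union> K) \<subseteq> Y1 \<union> K" using w Y1(1) by blast
        hence "indep N (insert w (Y0 \<union> K))" by (rule m_mono[OF mat Y1s(2)])
        thus False using n by contradiction
      qed
    qed
  qed
  have u: "(Y1 \<inter> X) \<union> (Y1 \<inter> Y) = Y1" using Y1s(1) by blast
  have fY1: "finite Y1" using finite_subset[OF Y1s(1) fXY2] .
  have "card (Y1 \<inter> X) + card (Y1 \<inter> Y) = card ((Y1 \<inter> X) \<union> (Y1 \<inter> Y)) + card ((Y1 \<inter> X) \<inter> (Y1 \<inter> Y))"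
    using card_Un_Int[of "Y1 \<inter> X" "Y1 \<inter> Y"] fY1 by simp
  hence "card (Y1 \<inter> X) + card (Y1 \<inter> Y) = card Y1 + card Y0" using u c by simp
  thus "rkK N K (X \<inter> Y) + rkK N K (X \<union> Y) \<le> rkK N K X + rkK N K Y" using a b r0 r1 by linarith
qed

lemma rk_eq_card:
  assumes f: "finite Z" and r: "rkK N K Z = card Z" shows "indep N (Z \<union> K)"
proof -
  obtain Y where Y: "Y \<subseteq> Z" "indep N (Y \<union> K)" "card Y = rkK N K Z" using rk_ex[OF f] by blast
  have "Y = Z" using card_subset_eq[OF f Y(1)] Y(3) r by simp
  thus ?thesis using Y by simp
qed

end


lemma base_restrict:
  assumes "basis M X A" shows "base (restrict M X) A"
  using assms unfolding base_def basis_def restrict_def by auto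

lemma contract_to_indep:
  assumes mN: "is_matroid N" and XE: "X \<subseteq> carrier N" and B: "base N B"
    and K2B: "K2 \<subseteq> B" and K2: "basis N (carrier N - X) K2" and A: "A \<subseteq> X" "A \<subseteq> B"
  shows "indep (contract_to N X) A"
proof -
  have cX: "carrier N - (carrier N - X) = X" using XE by blast
  define R where "R = restrict (dual N) X"
  have ct: "contract_to N X = dual R" unfolding contract_to_def contract_def R_def cX ..
  define S where "S = X - B"
  have Bi: "indep N B" using base_indep[OF mN B] .
  have K2X: "K2 \<subseteq> carrier N - X" using basis_sub[OF mN K2] .
  have Si: "indep (dual N) S" unfolding indep_dual[OF mN] S_def using B XE by blast
  have Smax: "\<And>T. indep (dual N) T \<Longrightarrow> S \<subseteq> T \<Longrightarrow> T \<subseteq> X \<Longrightarrow> T = S"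
  proof (rule ccontr)
    fix T assume T: "indep (dual N) T" "S \<subseteq> T" "T \<subseteq> X" and ne: "T \<noteq> S"
    obtain B3 where B3: "base N B3" "T \<subseteq> carrier N - B3" using T(1) unfolding indep_dual[OF mN] by blast
    obtain t where t: "t \<in> T" "t \<notin> S" using T(2) ne by blast
    have B3i: "indep N B3" using base_indep[OF mN B3(1)] .
    have B3E: "B3 \<subseteq> carrier N" using m_sub_carrier[OF mN B3i] .
    have sub: "K2 \<union> (B3 \<inter> X) \<subseteq> carrier N" using K2X B3E by blast
    have K2i: "indep N K2" using basis_indep[OF mN K2] .
    obtain B4 where B4: "K2 \<subseteq> B4" "basis N (K2 \<union> (B3 \<inter> X)) B4"
      using m_IM[OF mN K2i _ sub] by blast
    have B4i: "indep N B4" using basis_indep[OF mN B4(2)] .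
    have B4s: "B4 \<subseteq> K2 \<union> (B3 \<inter> X)" using basis_sub[OF mN B4(2)] .
    have B4b: "base N B4"
    proof (rule ccontr)
      assume nb: "\<not> base N B4"
      obtain z where z: "z \<in> B3" "z \<notin> B4" "indep N (insert z B4)" using m_aug[OF mN B4i nb B3(1)] by blast
      show False
      proof (cases "z \<in> X")
        case True
        hence "z \<in> K2 \<union> (B3 \<inter> X)" using z by blast
        thus False using basis_max[OF mN B4(2) _ z(2)] z(3) by blast
      next
        case False
        hence zE: "z \<in> carrier N - X" using z(1) B3E by blast
        have zK: "z \<notin> K2" using z(2) B4(1) by blast
        have "insert z K2 \<subseteq> insert z B4" using B4(1) by blast
        hence "indep N (insert z K2)" by (rule m_mono[OF mN z(3)])
        thus False using basis_max[OF mN K2 zE zK] by blast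
      qed
    qed
    have "B3 \<inter> X \<subseteq> B" using B3 T(2) unfolding S_def by blast
    hence B4B: "B4 \<subseteq> B" using B4s K2B by blast
    have tB: "t \<in> B" using t T(3) unfolding S_def by blast
    have tB4: "t \<notin> B4" using B4s t T(3) B3(2) K2X by blast
    have "insert t B4 \<subseteq> B" using B4B tB by blast
    hence "indep N (insert t B4)" by (rule m_mono[OF mN Bi])
    thus False using base_max[OF mN B4b tB4] by blast
  qed
  have SX: "S \<subseteq> X" unfolding S_def by blast
  have bR: "base R S" unfolding base_def basis_def R_def restrict_def using Si SX Smax by auto
  have "A \<subseteq> carrier R - S" unfolding R_def restrict_def S_def using A by auto
  hence "indep (dual R) A" using bR unfolding dual_def by auto
  thus ?thesis using ct by simp
qed

lemma cond_plus_coindep: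
  assumes mN: "is_matroid N" and cp: "cond_plus M N"
  shows "\<exists>B0. base N B0 \<and> (\<forall>W. wave M N W \<longrightarrow> W \<inter> B0 = {})"
proof -
  let ?U = "wave_union M N"
  define R where "R = restrict (dual N) (carrier N - (carrier N - ?U))"
  have ct: "contract_to N ?U = dual R" unfolding contract_to_def contract_def R_def ..
  have b: "base (dual R) {}" using cp ct unfolding cond_plus_def by simp
  have cR: "carrier (dual R) = carrier N - (carrier N - ?U)" unfolding dual_def R_def restrict_def by simp
  have "indep (dual R) {}" using b unfolding base_def basis_def by blast
  then obtain S where S: "base R S" unfolding dual_def by auto
  have "indep (dual R) (carrier R - S)" unfolding dual_def using S by auto
  moreover have "carrier R - S \<subseteq> carrier (dual R)" using cR unfolding R_def restrict_def by auto
  ultimately have e: "carrier R - S = {}" using b unfolding base_def basis_def by blast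
  have "indep R S" using S unfolding base_def basis_def by blast
  hence "indep (dual N) S" unfolding R_def restrict_def by simp
  then obtain B0 where B0: "base N B0" "S \<subseteq> carrier N - B0" unfolding indep_dual[OF mN] by blast
  have cRU: "carrier R = carrier N - (carrier N - ?U)" unfolding R_def restrict_def by simp
  have "\<forall>W. wave M N W \<longrightarrow> W \<inter> B0 = {}"
  proof (intro allI impI)
    fix W assume w: "wave M N W"
    have WU: "W \<subseteq> ?U" unfolding wave_union_def using w by blast
    show "W \<inter> B0 = {}"
    proof (rule ccontr)
      assume "W \<inter> B0 \<noteq> {}"
      then obtain x where x: "x \<in> W" "x \<in> B0" by blast
      have "x \<in> carrier N" using m_sub_carrier[OF mN base_indep[OF mN B0(1)]] x by blast
      hence "x \<in> carrier R" using cRU WU x by blast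
      hence "x \<in> S" using e by blast
      thus False using B0 x by blast
    qed
  qed
  thus ?thesis using B0 by blast
qed



lemma finite_claim:
  fixes M N :: "'a matroid"
  assumes mM: "is_matroid M" and mN: "is_matroid N" and cE: "carrier N = carrier M"
    and B0: "base N B0" and coind: "\<And>W. wave M N W \<Longrightarrow> W \<inter> B0 = {}"
    and fF: "finite F" and FE: "F \<subseteq> carrier M"
  shows "\<exists>B. base N B \<and> indep M (B \<inter> F)"
proof -
  let ?E = "carrier M"
  have sub0: "?E - F \<subseteq> carrier N" using cE by blast
  obtain K where K: "basis N (?E - F) K" using m_IM[OF mN m_empty[OF mN] _ sub0] by blast
  have Ki: "indep N K" using basis_indep[OF mN K] .
  have KEF: "K \<subseteq> ?E - F" using basis_sub[OF mN K] .
  have FK: "F \<inter> K = {}" using KEF by blast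
  have Mi0: "indep M {}" using m_empty[OF mM] .
  define r1 where "r1 = rkK M {}"
  define r2 where "r2 = rkK N K"
  have R1: "\<And>Z. finite Z \<Longrightarrow> rankf Z r1" unfolding r1_def using rk_rankf[OF mM Mi0] by simp
  have R2: "\<And>Z. finite Z \<Longrightarrow> Z \<inter> K = {} \<Longrightarrow> rankf Z r2" unfolding r2_def using rk_rankf[OF mN Ki] by simp
  obtain I X0 where ed: "I \<subseteq> F" "X0 \<subseteq> F" "r1 I = card I" "r2 I = card I" "r1 X0 + r2 (F - X0) \<le> card I"
    using edmonds[OF fF R1[OF fF] R2[OF fF FK]] by blast
  have fI: "finite I" using finite_subset[OF ed(1) fF] .
  have IMi: "indep M I" using rk_eq_card[OF mM Mi0 fI] ed(3) unfolding r1_def by simp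
  have INi: "indep N (I \<union> K)" using rk_eq_card[OF mN Ki fI] ed(4) unfolding r2_def by simp
  show ?thesis
  proof (cases "r2 F \<le> card I")
    case True
    have bB: "base N (I \<union> K)"
    proof (rule baseI[OF mN INi])
      fix z assume z: "z \<in> carrier N" "z \<notin> I \<union> K"
      show "\<not> indep N (insert z (I \<union> K))"
      proof
        assume zi: "indep N (insert z (I \<union> K))"
        show False
        proof (cases "z \<in> F")
          case True
          have s: "insert z I \<subseteq> F" using True ed(1) by blast
          have "indep N (insert z I \<union> K)" using zi by simp
          hence "card (insert z I) \<le> r2 F" using rk_le[OF mN Ki fF s] unfolding r2_def by blast
          moreover have "card (insert z I) = Suc (card I)" using fI z by simp
          ultimately show False using \<open>r2 F \<le> card I\<close> by simp
        next
          case False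
          hence zz: "z \<in> ?E - F" "z \<notin> K" using z cE by blast+
          have "insert z K \<subseteq> insert z (I \<union> K)" by blast
          hence "indep N (insert z K)" by (rule m_mono[OF mN zi])
          thus False using basis_max[OF mN K zz] by blast
        qed
      qed
    qed
    have "(I \<union> K) \<inter> F = I" using ed(1) FK by blast
    thus ?thesis using bB IMi by metis
  next
    case False
    hence lt: "card I < r2 F" by simp
    define m where "m = (\<lambda>Y. r1 Y + r2 (F - Y))"
    obtain X where X: "X \<subseteq> F" "\<And>Y. Y \<subseteq> F \<Longrightarrow> m X \<le> m Y"
      using ex_has_least_nat[of "\<lambda>Y. Y \<subseteq> F" X0 m] ed(2) by blast
    have mX: "m X < r2 F" using X(2)[OF ed(2)] ed(5) lt unfolding m_def by simp
    have fX: "finite X" using finite_subset[OF X(1) fF] .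
    have fFX: "finite (F - X)" using fF by simp
    have k0: "indep N ({} \<union> K)" using Ki by simp
    have "\<exists>Y'. {} \<subseteq> Y' \<and> kb N K (F - X) Y'" using rk_ext[OF mN Ki fFX empty_subsetI k0] .
    then obtain Y0 where Y0: "kb N K (F - X) Y0" by metis
    have Y0s: "Y0 \<subseteq> F - X" "indep N (Y0 \<union> K)" using Y0 unfolding kb_def by blast+
    define K2 where "K2 = Y0 \<union> K"
    have K2i: "indep N K2" using Y0s unfolding K2_def by simp
    have XE: "X \<subseteq> carrier N" using X(1) FE cE by blast
    have K2b: "basis N (carrier N - X) K2"
    proof (rule basisI[OF mN K2i])
      show "K2 \<subseteq> carrier N - X" unfolding K2_def using Y0s(1) KEF cE FE X(1) by blast
      fix z assume z: "z \<in> carrier N - X" "z \<notin> K2"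
      show "\<not> indep N (insert z K2)"
      proof (cases "z \<in> F")
        case True
        hence "z \<in> (F - X) - Y0" using z unfolding K2_def by blast
        thus ?thesis using Y0 unfolding kb_def K2_def by blast
      next
        case False
        hence zz: "z \<in> ?E - F" "z \<notin> K" using z cE unfolding K2_def by blast+
        show ?thesis
        proof
          assume zi: "indep N (insert z K2)"
          have "insert z K \<subseteq> insert z K2" unfolding K2_def by blast
          hence "indep N (insert z K)" by (rule m_mono[OF mN zi])
          thus False using basis_max[OF mN K zz] by blast
        qed
      qed
    qed
    have XK2: "X \<inter> K2 = {}" unfolding K2_def using Y0s(1) FK X(1) by blast
    define r3 where "r3 = rkK N K2"
    have R3: "rankf X r3" unfolding r3_def using rk_rankf[OF mN K2i fX XK2] .
    have ident: "\<And>Z. Z \<subseteq> X \<Longrightarrow> r3 Z + r2 (F - X) = r2 (Z \<union> (F - X))"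
    proof -
      fix Z assume ZX: "Z \<subseteq> X"
      have fZ: "finite Z" using finite_subset[OF ZX fX] .
      have k2: "indep N ({} \<union> K2)" using K2i by simp
      have "\<exists>Y'. {} \<subseteq> Y' \<and> kb N K2 Z Y'" using rk_ext[OF mN K2i fZ empty_subsetI k2] .
      then obtain Y where Y: "kb N K2 Z Y" by metis
      have Ys: "Y \<subseteq> Z" "indep N (Y \<union> K2)" using Y unfolding kb_def by blast+
      have fZF: "finite (Z \<union> (F - X))" using fZ fF by simp
      have kbU: "kb N K (Z \<union> (F - X)) (Y \<union> Y0)" unfolding kb_def
      proof (intro conjI ballI)
        show "Y \<union> Y0 \<subseteq> Z \<union> (F - X)" using Ys Y0s by blast
        have "Y \<union> Y0 \<union> K = Y \<union> K2" unfolding K2_def by blast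
        thus "indep N (Y \<union> Y0 \<union> K)" using Ys by simp
        fix z assume z: "z \<in> Z \<union> (F - X) - (Y \<union> Y0)"
        show "\<not> indep N (insert z (Y \<union> Y0 \<union> K))"
        proof (cases "z \<in> Z")
          case True
          hence "\<not> indep N (insert z (Y \<union> K2))" using Y z unfolding kb_def by blast
          moreover have "insert z (Y \<union> K2) = insert z (Y \<union> Y0 \<union> K)" unfolding K2_def by blast
          ultimately show ?thesis by simp
        next
          case False
          hence "z \<in> (F - X) - Y0" using z by blast
          hence n: "\<not> indep N (insert z (Y0 \<union> K))" using Y0 unfolding kb_def by blast
          show ?thesis
          proof
            assume "indep N (insert z (Y \<union> Y0 \<union> K))"
            moreover have "insert z (Y0 \<union> K) \<subseteq> insert z (Y \<union> Y0 \<union> K)" by blast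
            ultimately have "indep N (insert z (Y0 \<union> K))" using m_mono[OF mN] by blast
            thus False using n by contradiction
          qed
        qed
      qed
      have d1: "Z \<inter> K2 = {}" using XK2 ZX by blast
      have d2: "(F - X) \<inter> K = {}" using FK by blast
      have d3: "(Z \<union> (F - X)) \<inter> K = {}" using FK ZX X(1) by blast
      have c1: "card Y = r3 Z" using rk_kb[OF mN K2i fZ d1 Y] unfolding r3_def .
      have c2: "card Y0 = r2 (F - X)" using rk_kb[OF mN Ki fFX d2 Y0] unfolding r2_def .
      have c3: "card (Y \<union> Y0) = r2 (Z \<union> (F - X))" using rk_kb[OF mN Ki fZF d3 kbU] unfolding r2_def .
      have fY: "finite Y" using finite_subset[OF Ys(1) fZ] .
      have fY0: "finite Y0" using finite_subset[OF Y0s(1) fFX] .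
      have "Y \<inter> Y0 = {}" using Ys(1) ZX Y0s(1) by blast
      hence "card (Y \<union> Y0) = card Y + card Y0" using card_Un_disjoint[OF fY fY0] by simp
      thus "r3 Z + r2 (F - X) = r2 (Z \<union> (F - X))" using c1 c2 c3 by simp
    qed
    obtain A Y where ed2: "A \<subseteq> X" "Y \<subseteq> X" "r1 A = card A" "r3 A = card A" "r1 Y + r3 (X - Y) \<le> card A"
      using edmonds[OF fX R1[OF fX] R3] by blast
    have "X - Y \<subseteq> X" by blast
    hence id2: "r3 (X - Y) + r2 (F - X) = r2 ((X - Y) \<union> (F - X))" using ident by blast
    have "(X - Y) \<union> (F - X) = F - Y" using X(1) ed2(2) by blast
    hence id3: "r3 (X - Y) + r2 (F - X) = r2 (F - Y)" using id2 by simp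
    have "m X \<le> m Y" using X(2) ed2(2) X(1) by blast
    hence "r1 X + r2 (F - X) \<le> r1 Y + r2 (F - Y)" unfolding m_def .
    hence cA: "r1 X \<le> card A" using ed2(5) id3 by linarith
    have fA: "finite A" using finite_subset[OF ed2(1) fX] .
    have AMi: "indep M A" using rk_eq_card[OF mM Mi0 fA] ed2(3) unfolding r1_def by simp
    have ANi: "indep N (A \<union> K2)" using rk_eq_card[OF mN K2i fA] ed2(4) unfolding r3_def by simp
    have Ab: "basis M X A"
    proof (rule basisI[OF mM AMi ed2(1)])
      fix z assume z: "z \<in> X" "z \<notin> A"
      show "\<not> indep M (insert z A)"
      proof
        assume "indep M (insert z A)"
        hence i: "indep M (insert z A \<union> {})" by simp
        have s: "insert z A \<subseteq> X" using z ed2(1) by blast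
        have "card (insert z A) \<le> r1 X" using rk_le[OF mM Mi0 fX s i] unfolding r1_def .
        moreover have "card (insert z A) = Suc (card A)" using fA z by simp
        ultimately show False using cA by simp
      qed
    qed
    obtain B'' where B'': "base N B''" "A \<union> K2 \<subseteq> B''" using extend_base[OF mN ANi] by blast
    have ct: "indep (contract_to N X) A"
      using contract_to_indep[OF mN XE B''(1) _ K2b ed2(1)] B''(2) by blast
    have wv: "wave M N X" unfolding wave_def
      using X(1) FE base_restrict[OF Ab] ct by blast
    have XB0: "X \<inter> B0 = {}" using coind[OF wv] .
    have B0i: "indep N B0" using base_indep[OF mN B0] .
    have B0E: "B0 \<subseteq> carrier N" using m_sub_carrier[OF mN B0i] .
    have sub5: "K \<union> (B0 \<inter> F) \<subseteq> carrier N" using KEF cE B0E by blast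
    obtain B5 where B5: "K \<subseteq> B5" "basis N (K \<union> (B0 \<inter> F)) B5" using m_IM[OF mN Ki _ sub5] by blast
    have B5i: "indep N B5" using basis_indep[OF mN B5(2)] .
    have B5s: "B5 \<subseteq> K \<union> (B0 \<inter> F)" using basis_sub[OF mN B5(2)] .
    have B5b: "base N B5"
    proof (rule ccontr)
      assume nb: "\<not> base N B5"
      obtain z where z: "z \<in> B0" "z \<notin> B5" "indep N (insert z B5)" using m_aug[OF mN B5i nb B0] by blast
      show False
      proof (cases "z \<in> F")
        case True
        hence "z \<in> K \<union> (B0 \<inter> F)" using z by blast
        thus False using basis_max[OF mN B5(2) _ z(2)] z(3) by blast
      next
        case False
        hence zz: "z \<in> ?E - F" "z \<notin> K" using z B0E cE B5(1) by blast+
        have "insert z K \<subseteq> insert z B5" using B5(1) by blast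
        hence "indep N (insert z K)" by (rule m_mono[OF mN z(3)])
        thus False using basis_max[OF mN K zz] by blast
      qed
    qed
    define Y5 where "Y5 = B5 - K"
    have Y5s: "Y5 \<subseteq> F - X" unfolding Y5_def using B5s XB0 by blast
    have Y5K: "Y5 \<union> K = B5" unfolding Y5_def using B5(1) by blast
    have kb5: "kb N K F Y5" unfolding kb_def
    proof (intro conjI ballI)
      show "Y5 \<subseteq> F" using Y5s by blast
      show "indep N (Y5 \<union> K)" using Y5K B5i by simp
      fix z assume z: "z \<in> F - Y5"
      have "z \<notin> B5" using z FK unfolding Y5_def by blast
      thus "\<not> indep N (insert z (Y5 \<union> K))" using base_max[OF mN B5b] Y5K by simp
    qed
    have "card Y5 = r2 F" using rk_kb[OF mN Ki fF FK kb5] unfolding r2_def .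
    moreover have "card Y5 \<le> r2 (F - X)"
      using rk_le[OF mN Ki fFX Y5s] Y5K B5i unfolding r2_def by simp
    ultimately have "r2 F \<le> r2 (F - X)" by simp
    hence "r2 F \<le> m X" unfolding m_def by simp
    thus ?thesis using mX by simp
  qed
qed



theorem mainTheorem6:
  fixes M N :: "'a matroid"
  assumes "is_matroid M" and "is_matroid N"
    and "carrier N = carrier M"
    and "finitary M" and "cofinitary N"
    and "cond_plus M N"
  shows "\<exists>B. base N B \<and> indep M B"
proof -
  note mM = assms(1) and mN = assms(2) and cE = assms(3)
  let ?E = "carrier M"
  obtain B0 where B0: "base N B0" "\<forall>W. wave M N W \<longrightarrow> W \<inter> B0 = {}"
    using cond_plus_coindep[OF mN assms(6)] by blast
  have fc: "\<And>F. finite F \<Longrightarrow> \<exists>B. base N B \<and> indep M (B \<inter> F)"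
  proof -
    fix F :: "'a set" assume fF: "finite F"
    have f2: "finite (F \<inter> ?E)" using fF by simp
    obtain B where B: "base N B" "indep M (B \<inter> (F \<inter> ?E))"
      using finite_claim[OF mM mN cE B0(1) _ f2] B0(2) by blast
    have "B \<subseteq> ?E" using m_sub_carrier[OF mN base_indep[OF mN B(1)]] cE by simp
    hence "B \<inter> (F \<inter> ?E) = B \<inter> F" by blast
    thus "\<exists>B. base N B \<and> indep M (B \<inter> F)" using B by metis
  qed
  define fs where "fs = (\<lambda>L. \<forall>F. finite F \<longrightarrow> (\<exists>B. base N B \<and> indep M (B \<inter> F) \<and>
      (\<forall>x b. (x, b) \<in> L \<longrightarrow> x \<in> F \<longrightarrow> (x \<in> B \<longleftrightarrow> b))))"
  define AA where "AA = {L. L \<subseteq> ?E \<times> UNIV \<and> fs L}"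
  have fs0: "fs {}" unfolding fs_def using fc by simp
  have ch: "\<forall>C\<in>chains AA. \<Union>C \<in> AA"
  proof
    fix C assume C: "C \<in> chains AA"
    have sc: "subset.chain AA C" using C unfolding chains_alt_def by simp
    have CA: "C \<subseteq> AA" using sc unfolding subset_chain_def by blast
    show "\<Union>C \<in> AA"
    proof (cases "C = {}")
      case True
      thus ?thesis unfolding AA_def using fs0 by simp
    next
      case Cne: False
      have s: "\<Union>C \<subseteq> ?E \<times> UNIV" using CA unfolding AA_def by blast
      have "fs (\<Union>C)" unfolding fs_def
      proof (intro allI impI)
        fix F :: "'a set" assume fF: "finite F"
        let ?Lf = "{l \<in> \<Union>C. fst l \<in> F}"
        have sub: "?Lf \<subseteq> F \<times> (UNIV :: bool set)" by auto
        have "finite (F \<times> (UNIV :: bool set))" using fF by simp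
        hence fLf: "finite ?Lf" using sub by (rule finite_subset[rotated])
        obtain L0 where L0: "L0 \<in> C" "?Lf \<subseteq> L0"
          using finite_subset_Union_chain[OF fLf _ Cne sc] by blast
        have "fs L0" using CA L0(1) unfolding AA_def by blast
        then obtain B where B: "base N B" "indep M (B \<inter> F)"
          "\<forall>x b. (x, b) \<in> L0 \<longrightarrow> x \<in> F \<longrightarrow> (x \<in> B \<longleftrightarrow> b)"
          using fF unfolding fs_def by blast
        have "\<forall>x b. (x, b) \<in> \<Union>C \<longrightarrow> x \<in> F \<longrightarrow> (x \<in> B \<longleftrightarrow> b)"
        proof (intro allI impI)
          fix x b assume xb: "(x, b) \<in> \<Union>C" "x \<in> F"
          hence "(x, b) \<in> L0" using L0(2) by auto
          thus "x \<in> B \<longleftrightarrow> b" using B(3) xb(2) by blast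
        qed
        thus "\<exists>B. base N B \<and> indep M (B \<inter> F) \<and> (\<forall>x b. (x, b) \<in> \<Union>C \<longrightarrow> x \<in> F \<longrightarrow> (x \<in> B \<longleftrightarrow> b))"
          using B by blast
      qed
      thus ?thesis unfolding AA_def using s by blast
    qed
  qed
  obtain L where L: "L \<in> AA" "\<forall>X\<in>AA. L \<subseteq> X \<longrightarrow> X = L" using Zorn_Lemma[OF ch] by blast
  have Ls: "L \<subseteq> ?E \<times> UNIV" and fsL: "fs L" using L(1) unfolding AA_def by blast+
  have tot: "\<And>x. x \<in> ?E \<Longrightarrow> (x, True) \<in> L \<or> (x, False) \<in> L"
  proof (rule ccontr)
    fix x assume xE: "x \<in> ?E" and nn: "\<not> ((x, True) \<in> L \<or> (x, False) \<in> L)"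
    have n1: "\<not> fs (insert (x, True) L)"
    proof
      assume "fs (insert (x, True) L)"
      hence "insert (x, True) L \<in> AA" unfolding AA_def using Ls xE by blast
      hence "insert (x, True) L = L" using L(2) by blast
      thus False using nn by blast
    qed
    have n2: "\<not> fs (insert (x, False) L)"
    proof
      assume "fs (insert (x, False) L)"
      hence "insert (x, False) L \<in> AA" unfolding AA_def using Ls xE by blast
      hence "insert (x, False) L = L" using L(2) by blast
      thus False using nn by blast
    qed
    obtain F1 where F1: "finite F1" "\<not> (\<exists>B. base N B \<and> indep M (B \<inter> F1) \<and>
      (\<forall>y b. (y, b) \<in> insert (x, True) L \<longrightarrow> y \<in> F1 \<longrightarrow> (y \<in> B \<longleftrightarrow> b)))"
      using n1 unfolding fs_def by blast
    obtain F2 where F2: "finite F2" "\<not> (\<exists>B. base N B \<and> indep M (B \<inter> F2) \<and>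
      (\<forall>y b. (y, b) \<in> insert (x, False) L \<longrightarrow> y \<in> F2 \<longrightarrow> (y \<in> B \<longleftrightarrow> b)))"
      using n2 unfolding fs_def by blast
    have fF: "finite (insert x (F1 \<union> F2))" using F1(1) F2(1) by simp
    obtain B where B: "base N B" "indep M (B \<inter> insert x (F1 \<union> F2))"
      "\<forall>y b. (y, b) \<in> L \<longrightarrow> y \<in> insert x (F1 \<union> F2) \<longrightarrow> (y \<in> B \<longleftrightarrow> b)"
      using fsL fF unfolding fs_def by blast
    show False
    proof (cases "x \<in> B")
      case True
      have "indep M (B \<inter> F1)" using m_mono[OF mM B(2)] by blast
      moreover have "\<forall>y b. (y, b) \<in> insert (x, True) L \<longrightarrow> y \<in> F1 \<longrightarrow> (y \<in> B \<longleftrightarrow> b)"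
        using B(3) True by auto
      ultimately show False using F1(2) B(1) by blast
    next
      case False
      have "indep M (B \<inter> F2)" using m_mono[OF mM B(2)] by blast
      moreover have "\<forall>y b. (y, b) \<in> insert (x, False) L \<longrightarrow> y \<in> F2 \<longrightarrow> (y \<in> B \<longleftrightarrow> b)"
        using B(3) False by auto
      ultimately show False using F2(2) B(1) by blast
    qed
  qed
  define A where "A = {x. (x, True) \<in> L}"
  have AE: "A \<subseteq> ?E" unfolding A_def using Ls by blast
  have Ai: "indep M A"
  proof (rule finitary_indep[OF mM assms(4) AE])
    fix G assume G: "finite G" "G \<subseteq> A"
    obtain B where B: "base N B" "indep M (B \<inter> G)"
      "\<forall>y b. (y, b) \<in> L \<longrightarrow> y \<in> G \<longrightarrow> (y \<in> B \<longleftrightarrow> b)"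
      using fsL G(1) unfolding fs_def by blast
    have "G \<subseteq> B" using B(3) G(2) unfolding A_def by blast
    hence "B \<inter> G = G" by blast
    thus "indep M G" using B(2) by simp
  qed
  have DE: "?E - A \<subseteq> carrier N" using cE by simp
  obtain Bf where Bf: "base N Bf" "(?E - A) \<inter> Bf = {}"
  proof -
    have "\<exists>B. base N B \<and> (?E - A) \<inter> B = {}"
    proof (rule cofinitary_coindep[OF mN assms(5) DE])
      fix G assume G: "finite G" "G \<subseteq> ?E - A"
      obtain B where B: "base N B" "indep M (B \<inter> G)"
        "\<forall>y b. (y, b) \<in> L \<longrightarrow> y \<in> G \<longrightarrow> (y \<in> B \<longleftrightarrow> b)"
        using fsL G(1) unfolding fs_def by blast
      have "\<forall>y\<in>G. (y, False) \<in> L" using G(2) tot unfolding A_def by blast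
      hence "G \<inter> B = {}" using B(3) by blast
      thus "\<exists>B. base N B \<and> G \<inter> B = {}" using B(1) by blast
    qed
    thus ?thesis using that by blast
  qed
  have "Bf \<subseteq> ?E" using m_sub_carrier[OF mN base_indep[OF mN Bf(1)]] cE by simp
  hence "Bf \<subseteq> A" using Bf(2) by blast
  hence "indep M Bf" by (rule m_mono[OF mM Ai])
  thus ?thesis using Bf(1) by blast
qed


end
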